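(* Let $\gamma>1$ and let $f\in\mathcal K_\infty$ satisfy $f(x)>x$ for all $x>0$. Then there exists $g\in\mathcal K$ such that $g(f(x))=\gamma\,g(x)$ for all $x\in\mathbb R_+$.
   Context: $\mathcal K$: continuous strictly increasing functions $\alpha:\mathbb R_+\to\mathbb R_+$ with $\alpha(0)=0$; $\mathcal K_\infty$: those $\alpha\in\mathcal K$ with $\lim_{x\to+\infty}\alpha(x)=+\infty$. *)

theory Defs
  imports Complex_Main
begin

definition class_K :: "(real \<Rightarrow> real) \<Rightarrow> bool" where
  "class_K \<alpha> \<longleftrightarrow> continuous_on {0..} \<alpha> \<and> strict_mono_on {0..} \<alpha> \<and> \<alpha> 0 = 0
     \<and> (\<forall>x\<ge>0. \<alpha> x \<ge> 0)"

definition class_K_inf :: "(real \<Rightarrow> real) \<Rightarrow> bool" where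
  "class_K_inf \<alpha> \<longleftrightarrow> class_K \<alpha> \<and> filterlim \<alpha> at_top at_top"

end

theory Submission
  imports Defs
begin

locale setting =
  fixes f :: "real \<Rightarrow> real" and \<gamma> :: real
  assumes gam: "\<gamma> > 1"
    and cont: "continuous_on {0..} f"
    and smono: "strict_mono_on {0..} f"
    and f0: "f 0 = 0"
    and fnn: "\<And>x. x \<ge> 0 \<Longrightarrow> f x \<ge> 0"
    and lim: "filterlim f at_top at_top"
    and fgt: "\<And>x. x > 0 \<Longrightarrow> f x > x"
begin

lemma f_less: "0 \<le> x \<Longrightarrow> 0 \<le> y \<Longrightarrow> x < y \<Longrightarrow> f x < f y"
  using smono by (auto simp: strict_mono_on_def)

lemma f_le_iff: "0 \<le> x \<Longrightarrow> 0 \<le> y \<Longrightarrow> f x \<le> f y \<longleftrightarrow> x \<le> y"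
  using f_less by (metis linorder_not_le order_le_less)

lemma f_inj: "0 \<le> x \<Longrightarrow> 0 \<le> y \<Longrightarrow> f x = f y \<Longrightarrow> x = y"
  using f_le_iff by (metis order_antisym order_refl)

lemma f_surj: "0 \<le> y \<Longrightarrow> \<exists>x\<ge>0. f x = y"
proof -
  assume y: "0 \<le> y"
  have "eventually (\<lambda>x. y \<le> f x) at_top" using lim by (simp add: filterlim_at_top)
  then obtain N where N: "\<And>x. x \<ge> N \<Longrightarrow> y \<le> f x" by (auto simp: eventually_at_top_linorder)
  let ?b = "max N 0"
  have "y \<le> f ?b" using N by simp
  moreover have "f 0 \<le> y" using f0 y by simp
  moreover have "continuous_on {0..?b} f" using cont by (rule continuous_on_subset) auto
  ultimately obtain x where "0 \<le> x" "x \<le> ?b" "f x = y" using IVT'[of f 0 y ?b] by auto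
  then show ?thesis by auto
qed

definition finv where "finv y = (THE x. 0 \<le> x \<and> f x = y)"

lemma finv: "0 \<le> y \<Longrightarrow> 0 \<le> finv y \<and> f (finv y) = y"
  unfolding finv_def
  apply (rule theI')
  using f_surj f_inj by blast

lemma finv_f: "0 \<le> x \<Longrightarrow> finv (f x) = x"
  using finv[of "f x"] fnn f_inj by auto

lemma finv_pos: "0 < y \<Longrightarrow> 0 < finv y"
  using finv[of y] f0 by (metis less_eq_real_def)

lemma finv_less: "0 \<le> x \<Longrightarrow> 0 \<le> y \<Longrightarrow> x < y \<Longrightarrow> finv x < finv y"
  using finv[of x] finv[of y] f_le_iff by (metis linorder_not_le)

lemma finv_le: "0 \<le> y \<Longrightarrow> finv y \<le> y"
proof (cases "y = 0")
  case True then show ?thesis using finv_f[of 0] f0 by simp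
next
  case False
  assume "0 \<le> y"
  then have "0 < y" using False by simp
  then show ?thesis using finv_pos[of y] fgt[of "finv y"] finv[of y] by auto
qed

lemma finv_cont: "continuous_on {0..c} finv"
proof (cases "c \<ge> 0")
  case True
  have "continuous_on (f ` {0..c}) finv"
    by (rule continuous_on_inv) (auto intro: continuous_on_subset[OF cont] simp: finv_f)
  moreover have "{0..c} \<subseteq> f ` {0..c}"
  proof
    fix y assume y: "y \<in> {0..c}"
    have "f 0 \<le> y" using f0 y by simp
    moreover have "y \<le> f c" using y True fgt[of c] f0 by (cases "c = 0") auto
    moreover have "continuous_on {0..c} f" using cont by (rule continuous_on_subset) auto
    ultimately obtain x where "0 \<le> x" "x \<le> c" "f x = y" using IVT'[of f 0 y c] True by auto
    then show "y \<in> f ` {0..c}" by auto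
  qed
  ultimately show ?thesis by (rule continuous_on_subset)
next
  case False then show ?thesis by simp
qed

definition F :: "int \<Rightarrow> real \<Rightarrow> real" where
  "F n = (if 0 \<le> n then f ^^ nat n else finv ^^ nat (-n))"

lemma fpow_nonneg: "0 \<le> x \<Longrightarrow> 0 \<le> (f ^^ k) x"
  by (induction k) (auto intro: fnn)

lemma finvpow_nonneg: "0 \<le> x \<Longrightarrow> 0 \<le> (finv ^^ k) x"
  by (induction k) (auto simp: finv)

lemma F_0: "F 0 x = x" by (simp add: F_def)

lemma F_succ: "0 \<le> x \<Longrightarrow> F (n+1) x = f (F n x)"
proof (cases "0 \<le> n")
  case True
  then have "nat (n+1) = Suc (nat n)" by simp
  then show ?thesis using True by (simp add: F_def)
next
  case False
  assume x: "0 \<le> x"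
  have e1: "F (n+1) = finv ^^ nat (-(n+1))" using False by (auto simp: F_def)
  have "nat (-n) = Suc (nat (-(n+1)))" using False by simp
  then have e2: "F n x = finv ((finv ^^ nat (-(n+1))) x)" using False by (simp add: F_def)
  show ?thesis using e1 e2 finv finvpow_nonneg[OF x] by simp
qed

lemma F_nonneg: "0 \<le> x \<Longrightarrow> 0 \<le> F n x"
  by (simp add: F_def fpow_nonneg finvpow_nonneg)

lemma F_pred: "0 \<le> x \<Longrightarrow> F (n-1) x = finv (F n x)"
  using F_succ[of x "n-1"] finv_f F_nonneg by simp

lemma F_add: "0 \<le> x \<Longrightarrow> F a (F b x) = F (a+b) x"
proof (induction a rule: int_induct[where k=0])
  case base then show ?case by (simp add: F_0)
next
  case (step1 i)
  have "F (i+1) (F b x) = f (F i (F b x))" using F_succ F_nonneg step1 by simp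
  also have "\<dots> = f (F (i+b) x)" using step1 by (simp add: add.commute)
  also have "\<dots> = F (i+b+1) x" using F_succ step1 by simp
  finally show ?case by (simp add: algebra_simps)
next
  case (step2 i)
  have "F (i-1) (F b x) = finv (F i (F b x))" using F_pred F_nonneg step2 by simp
  also have "\<dots> = finv (F (i+b) x)" using step2 by (simp add: add.commute)
  also have "\<dots> = F (i+b-1) x" using F_pred step2 by simp
  finally show ?case by (simp add: algebra_simps)
qed

lemma F_less: "0 \<le> x \<Longrightarrow> x < y \<Longrightarrow> F n x < F n y"
proof (induction n rule: int_induct[where k=0])
  case base then show ?case by (simp add: F_0)
next
  case (step1 i) then show ?case using F_succ F_nonneg f_less by simp
next
  case (step2 i) then show ?case using F_pred F_nonneg finv_less by simp
qed

lemma F_le: "0 \<le> x \<Longrightarrow> x \<le> y \<Longrightarrow> F n x \<le> F n y"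
  using F_less by (metis order_le_less)

lemma F_pos: "0 < x \<Longrightarrow> 0 < F n x"
  using F_less[of 0 x n] F_nonneg[of 0 n] by (smt (verit) F_add F_0)

lemma F_cont: "continuous_on {0..c} (F n)"
proof (induction n rule: int_induct[where k=0])
  case base then show ?case by (simp add: F_def)
next
  case (step1 i)
  have "continuous_on {0..c} (\<lambda>x. f (F i x))"
    by (rule continuous_on_compose2[OF cont step1(2)]) (auto intro: F_nonneg)
  then show ?case by (rule continuous_on_cong[THEN iffD1, rotated 2]) (simp_all add: F_succ)
next
  case (step2 i)
  have "continuous_on {0..c} (\<lambda>x. finv (F i x))"
    by (rule continuous_on_compose2[OF finv_cont[of "F i c"] step2(2)]) (auto intro: F_nonneg F_le)
  then show ?case by (rule continuous_on_cong[THEN iffD1, rotated 2]) (simp_all add: F_pred)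
qed

definition p :: "int \<Rightarrow> real" where "p n = F n 1"

lemma p_pos: "0 < p n" unfolding p_def by (rule F_pos) simp

lemma p_succ: "p (n+1) = f (p n)" unfolding p_def by (simp add: F_succ)

lemma p_step: "p n < p (n+1)" using p_succ p_pos fgt by simp

lemma p_less: "m < n \<Longrightarrow> p m < p n"
proof (induction n rule: int_gr_induct)
  case base then show ?case using p_step by simp
next
  case (step i) then show ?case using p_step[of i] by simp
qed

lemma p_le_iff: "p m \<le> p n \<longleftrightarrow> m \<le> n"
  using p_less by (metis linorder_not_le order_le_less)

lemma p_above: "\<exists>n. x < p n"
proof (rule ccontr)
  assume "\<not> ?thesis"
  then have b: "\<forall>n. p n \<le> x" by (simp add: not_less)
  define s where "s k = p (int k)" for k
  have "incseq s" unfolding s_def incseq_def using p_le_iff by simp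
  moreover have "\<forall>i. s i \<le> x" using b s_def by simp
  ultimately obtain L where L: "s \<longlonglongrightarrow> L" "\<forall>i. s i \<le> L" by (rule incseq_convergent)
  have L0: "0 < L" using L(2) p_pos[of 0] unfolding s_def by (metis less_le_trans of_nat_0)
  have "(\<lambda>k. f (s k)) \<longlonglongrightarrow> f L"
    apply (rule continuous_on_tendsto_compose[OF cont L(1)])
    using L0 apply simp
    by (auto intro!: always_eventually simp: s_def less_imp_le[OF p_pos])
  moreover have "(\<lambda>k. f (s k)) = (\<lambda>k. s (Suc k))" unfolding s_def by (simp add: p_succ[symmetric] add.commute)
  ultimately have "(\<lambda>k. s (Suc k)) \<longlonglongrightarrow> f L" by simp
  then have "s \<longlonglongrightarrow> f L" using filterlim_sequentially_Suc[of s] by simp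
  then have "f L = L" using L(1) LIMSEQ_unique by blast
  then show False using fgt[OF L0] by simp
qed

lemma p_below: "0 < x \<Longrightarrow> \<exists>n. p n \<le> x"
proof (rule ccontr)
  assume x: "0 < x" and "\<not> (\<exists>n. p n \<le> x)"
  then have b: "\<forall>n. x \<le> p n" by (simp add: not_le less_imp_le)
  define s where "s k = p (- int k)" for k
  have "decseq s" unfolding s_def decseq_def using p_le_iff by simp
  moreover have "\<forall>i. x \<le> s i" using b s_def by simp
  ultimately obtain L where L: "s \<longlonglongrightarrow> L" "\<forall>i. L \<le> s i" by (rule decseq_convergent)
  have L0: "0 < L"
  proof -
    have "(\<lambda>k. x) \<longlonglongrightarrow> x" by simp
    then have "x \<le> L" using L(1) b s_def by (metis LIMSEQ_le_const)
    then show ?thesis using x by simp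
  qed
  have "(\<lambda>k. s (Suc k)) \<longlonglongrightarrow> L" using L(1) by (rule LIMSEQ_Suc)
  then have "(\<lambda>k. f (s (Suc k))) \<longlonglongrightarrow> f L"
    apply (rule continuous_on_tendsto_compose[OF cont])
    using L0 apply simp
    by (auto intro!: always_eventually simp: s_def less_imp_le[OF p_pos])
  moreover have "(\<lambda>k. f (s (Suc k))) = s"
  proof
    fix k
    have "- int (Suc k) + 1 = - int k" by simp
    then show "f (s (Suc k)) = s k" unfolding s_def using p_succ[of "- int (Suc k)"] by simp
  qed
  ultimately have "s \<longlonglongrightarrow> f L" by simp
  then have "f L = L" using L(1) LIMSEQ_unique by blast
  then show False using fgt[OF L0] by simp
qed

lemma idx_ex_aux: "p m \<le> x \<Longrightarrow> x < p (m + int k) \<Longrightarrow> \<exists>n. p n \<le> x \<and> x < p (n+1)"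
proof (induction k)
  case 0 then show ?case by simp
next
  case (Suc k)
  show ?case
  proof (cases "x < p (m + int k)")
    case True then show ?thesis using Suc by simp
  next
    case False then show ?thesis using Suc(3) by (intro exI[of _ "m + int k"]) (simp add: ac_simps)
  qed
qed

lemma idx_ex: "0 < x \<Longrightarrow> \<exists>n. p n \<le> x \<and> x < p (n+1)"
proof -
  assume x: "0 < x"
  obtain m where m: "p m \<le> x" using p_below[OF x] by blast
  obtain N where N: "x < p N" using p_above by blast
  have "m < N" using m N p_le_iff by (metis le_less_trans linorder_not_le order_less_imp_le)
  then have "N = m + int (nat (N - m))" by simp
  then show ?thesis using idx_ex_aux[OF m, of "nat (N - m)"] N by metis
qed

lemma idx_uniq: "p n \<le> x \<Longrightarrow> x < p (n+1) \<Longrightarrow> p m \<le> x \<Longrightarrow> x < p (m+1) \<Longrightarrow> n = m"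
  using p_le_iff by (smt (verit) p_le_iff)

definition idx where "idx x = (THE n. p n \<le> x \<and> x < p (n+1))"

lemma idx: "0 < x \<Longrightarrow> p (idx x) \<le> x \<and> x < p (idx x + 1)"
  unfolding idx_def by (rule theI') (use idx_ex idx_uniq in blast)

lemma idx_eq: "p n \<le> x \<Longrightarrow> x < p (n+1) \<Longrightarrow> idx x = n"
  using idx[of x] idx_uniq p_pos by (meson less_le_trans)

lemma idx_p: "idx (p n) = n" using idx_eq p_step by simp

definition phi where "phi y = 1 + (\<gamma> - 1) * (y - 1) / (f 1 - 1)"

lemma f1: "1 < f 1" using fgt[of 1] by simp

lemma phi_1: "phi 1 = 1" by (simp add: phi_def)
lemma phi_f1: "phi (f 1) = \<gamma>" using f1 by (simp add: phi_def)
lemma phi_less: "y < z \<Longrightarrow> phi y < phi z"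
  using f1 gam unfolding phi_def by (simp add: divide_strict_right_mono)
lemma phi_le: "y \<le> z \<Longrightarrow> phi y \<le> phi z"
  using phi_less by (metis order_le_less)

definition G where "G n x = \<gamma> powr (real_of_int n) * phi (F (-n) x)"

definition g where "g x = (if x \<le> 0 then 0 else G (idx x) x)"

lemma F1: "0 \<le> x \<Longrightarrow> F 1 x = f x" using F_succ[of x 0] by (simp add: F_0)

lemma Fp1: "F (-n) (p n) = 1" unfolding p_def by (simp add: F_add F_0)
lemma Fp2: "F (-n) (p (n+1)) = f 1" unfolding p_def by (simp add: F_add F1)

lemma G_left: "G n (p n) = \<gamma> powr n" by (simp add: G_def Fp1 phi_1)
lemma G_right: "G n (p (n+1)) = \<gamma> powr (n+1)"
  using gam by (simp add: G_def Fp2 phi_f1 powr_add)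

lemma g_piece: "p n \<le> x \<Longrightarrow> x \<le> p (n+1) \<Longrightarrow> g x = G n x"
proof (cases "x < p (n+1)")
  case True
  assume "p n \<le> x"
  then show ?thesis using True idx_eq p_pos unfolding g_def by (smt (verit))
next
  case False
  assume "x \<le> p (n+1)"
  then have x: "x = p (n+1)" using False by simp
  then show ?thesis unfolding g_def using p_pos idx_p G_left G_right by (smt (verit))
qed

lemma g_p: "g (p n) = \<gamma> powr n" using g_piece[of n "p n"] p_step[of n] G_left by (simp add: less_imp_le)

lemma G_cont: "continuous_on {0..c} (G n)"
proof -
  have "continuous_on {0..c} (F (-n))" by (rule F_cont)
  then show ?thesis using f1 unfolding G_def phi_def by (intro continuous_intros) auto
qed

lemma G_ge: "p n \<le> x \<Longrightarrow> \<gamma> powr n \<le> G n x"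
proof -
  assume x: "p n \<le> x"
  have "1 \<le> F (-n) x" using F_le[OF less_imp_le[OF p_pos] x, of "-n"] Fp1 by simp
  then have "1 \<le> phi (F (-n) x)" using phi_le phi_1 by metis
  then show ?thesis unfolding G_def using gam by simp
qed

lemma G_lt: "p n \<le> x \<Longrightarrow> x < p (n+1) \<Longrightarrow> G n x < \<gamma> powr (n+1)"
proof -
  assume x: "p n \<le> x" "x < p (n+1)"
  have "F (-n) x < f 1" using F_less[of x "p (n+1)" "-n"] x p_pos Fp2
    by (metis less_imp_le order_trans)
  then have "phi (F (-n) x) < \<gamma>" using phi_less phi_f1 by metis
  then show ?thesis unfolding G_def using gam by (simp add: powr_add)
qed

lemma g_pos: "0 < x \<Longrightarrow> 0 < g x"
  using idx[of x] G_ge[of "idx x" x] gam unfolding g_def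
  by (smt (verit) powr_gt_zero)

lemma g_mono: "0 \<le> x \<Longrightarrow> x < y \<Longrightarrow> g x < g y"
proof (cases "x = 0")
  case True
  assume "x < y" then show ?thesis using True g_pos by (simp add: g_def)
next
  case False
  assume x0: "0 \<le> x" and xy: "x < y"
  then have x: "0 < x" and y: "0 < y" using False by auto
  define n where "n = idx x"
  define m where "m = idx y"
  have nx: "p n \<le> x" "x < p (n+1)" using idx[OF x] n_def by auto
  have my: "p m \<le> y" "y < p (m+1)" using idx[OF y] m_def by auto
  have "p n < p (m+1)" using nx my xy by simp
  then have nm: "n \<le> m" using p_le_iff by (smt (verit))
  have gx: "g x = G n x" and gy: "g y = G m y" using x y n_def m_def by (auto simp: g_def)
  show ?thesis
  proof (cases "n = m")
    case True
    have "F (-n) x < F (-n) y" using F_less x xy by simp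
    then show ?thesis using True gx gy gam unfolding G_def using phi_less by simp
  next
    case False
    then have "n + 1 \<le> m" using nm by simp
    then have "\<gamma> powr (n+1) \<le> \<gamma> powr m" using gam by (intro powr_mono) auto
    then show ?thesis using gx gy G_lt[OF nx] G_ge[OF my(1)] by simp
  qed
qed

lemma g_feq: "0 \<le> x \<Longrightarrow> g (f x) = \<gamma> * g x"
proof (cases "x = 0")
  case True then show ?thesis by (simp add: f0 g_def)
next
  case False
  assume "0 \<le> x"
  then have x: "0 < x" using False by simp
  define n where "n = idx x"
  have nx: "p n \<le> x" "x < p (n+1)" using idx[OF x] n_def by auto
  have "p (n+1) \<le> f x" using p_succ f_le_iff nx(1) p_pos x by (metis less_imp_le)
  moreover have "f x < p (n+1+1)" using p_succ[of "n+1"] f_less[OF _ _ nx(2)] x p_pos[of "n+1"] by simp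
  ultimately have i: "idx (f x) = n+1" by (rule idx_eq)
  have fx: "0 < f x" using fgt x by (smt (verit))
  have "F (-(n+1)) (f x) = F (-n) x"
    using F_add[of x "-(n+1)" 1] F1 x by simp
  then have "g (f x) = \<gamma> powr (n+1) * phi (F (-n) x)"
    using fx i by (simp add: g_def G_def)
  also have "\<dots> = \<gamma> * g x" using x n_def gam by (simp add: g_def G_def powr_add)
  finally show ?thesis .
qed

lemma g_cont_piece: "continuous_on {p n..p (n+1)} g"
proof -
  have "continuous_on {p n..p (n+1)} (G n)"
    by (rule continuous_on_subset[OF G_cont[of "p (n+1)"]]) (use p_pos less_imp_le in auto)
  then show ?thesis by (rule continuous_on_cong[THEN iffD1, rotated 2]) (auto simp: g_piece)
qed

lemma g_cont_pos: "0 < x \<Longrightarrow> isCont g x"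
proof -
  assume x: "0 < x"
  define n where "n = idx x"
  have nx: "p n \<le> x" "x < p (n+1)" using idx[OF x] n_def by auto
  have "continuous_on ({p (n-1)..p (n-1+1)} \<union> {p n..p (n+1)}) g"
    by (intro continuous_on_closed_Un g_cont_piece) auto
  then have c: "continuous_on ({p (n-1)<..<p (n+1)}) g"
    by (rule continuous_on_subset) auto
  have "p (n-1) < x" using p_step[of "n-1"] nx by simp
  then show ?thesis using c nx continuous_on_eq_continuous_at[of "{p (n-1)<..<p (n+1)}" g] by auto
qed

lemma g_cont0: "continuous (at 0 within {0..}) g"
  unfolding continuous_within
proof (rule order_tendstoI)
  fix a :: real assume "a < g 0"
  then have "a < 0" by (simp add: g_def)
  then show "eventually (\<lambda>x. a < g x) (at 0 within {0..})"
    unfolding eventually_at using g_pos by (intro exI[of _ 1]) (auto simp: g_def, smt (verit))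
next
  fix a :: real assume "g 0 < a"
  then have a: "0 < a" by (simp add: g_def)
  obtain k where k: "1 / a < \<gamma> ^ k" using real_arch_pow[OF gam] by blast
  have "\<gamma> powr (- int k) = 1 / \<gamma> ^ k" using gam by (simp add: powr_minus powr_realpow divide_inverse)
  also have "\<dots> < a" using k a gam by (simp add: field_simps)
  finally have ka: "g (p (- int k)) < a" using g_p by simp
  show "eventually (\<lambda>x. g x < a) (at 0 within {0..})"
    unfolding eventually_at
  proof (intro exI[of _ "p (- int k)"] conjI ballI impI)
    show "0 < p (- int k)" by (rule p_pos)
    fix x :: real assume "x \<in> {0..}" "x \<noteq> 0 \<and> dist x 0 < p (- int k)"
    then have "0 \<le> x" "x < p (- int k)" by auto
    then show "g x < a" using g_mono ka by (metis less_trans)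
  qed
qed

lemma result: "class_K g \<and> (\<forall>x\<ge>0. g (f x) = \<gamma> * g x)"
proof -
  have "continuous_on {0..} g"
    unfolding continuous_on_eq_continuous_within
  proof
    fix x :: real assume "x \<in> {0..}"
    then have "x = 0 \<or> 0 < x" by auto
    then show "continuous (at x within {0..}) g"
      using g_cont0 g_cont_pos continuous_at_imp_continuous_at_within by blast
  qed
  moreover have "strict_mono_on {0..} g" unfolding strict_mono_on_def using g_mono by auto
  moreover have "\<forall>x\<ge>0. g x \<ge> 0" using g_pos by (auto simp: g_def less_imp_le)
  ultimately show ?thesis using g_feq unfolding class_K_def by (simp add: g_def)
qed

end

theorem mainTheorem14:
  fixes f :: "real \<Rightarrow> real" and \<gamma> :: real
  assumes "\<gamma> > 1"
    and "class_K_inf f"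
    and "\<And>x. x > 0 \<Longrightarrow> f x > x"
  shows "\<exists>g. class_K g \<and> (\<forall>x\<ge>0. g (f x) = \<gamma> * g x)"
proof -
  interpret setting f \<gamma>
    using assms unfolding class_K_inf_def class_K_def by unfold_locales auto
  show ?thesis using result by blast
qed

end
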